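(* Let $k, D, N$ be positive integers, let $G \subseteq S_k$ be a permutation group (a subgroup of the symmetric group on $\{1,\dots,k\}$), let $\Theta \in \mathbb{R}^{D \times D \times \dots \times D}$ be a real tensor of rank (order) $k$, and let $X \in \mathbb{R}^{N \times D}$, with entries $X^{j}_{i}$ for $1 \le j \le N$, $1 \le i \le D$. Define the order-$k$ tensor $\mathcal{S} \in \mathbb{R}^{D\times\dots\times D}$ by $$\mathcal{S}^{i_1 i_2 \dots i_k} = \sum_{\sigma \in G} \Theta^{i_{\sigma(1)} i_{\sigma(2)} \dots i_{\sigma(k)}},$$ the order-$k$ tensor $\mathcal{O} \in \mathbb{R}^{N\times\dots\times N}$ by $$\mathcal{O}^{j_1 j_2 \dots j_k} = \sum_{i_1,\dots,i_k=1}^{D} X^{j_1}_{i_1} X^{j_2}_{i_2} \cdots X^{j_k}_{i_k}\, \mathcal{S}^{i_1 i_2 \dots i_k},$$ and the order-$k$ tensor $\mathcal{P} \in \mathbb{R}^{N\times\dots\times N}$ by $$\mathcal{P}^{j_1 j_2 \dots j_k} = \frac{\exp\left(\mathcal{O}^{j_1 j_2 \dots j_k}\right)}{\sum_{l_1, \dots, l_k=1}^{N} \exp\left(\mathcal{O}^{l_1 l_2 \dots l_k}\right)}.$$ Then $\mathcal{P}$ is $G$-symmetric, i.e. for every $\sigma \in G$ and all indices $j_1,\dots,j_k \in \{1,\dots,N\}$, $$\mathcal{P}^{j_1 j_2 \dots j_k} = \mathcal{P}^{j_{\sigma(1)} j_{\sigma(2)} \dots j_{\sigma(k)}}.$$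
   Context: Tensors are indexed by superscripts; for an order-$k$ tensor $T$ and a permutation $\sigma \in S_k$, $T^{i_{\sigma(1)} \dots i_{\sigma(k)}}$ denotes the entry of $T$ whose $m$-th index is $i_{\sigma(m)}$. *)

theory Defs
  imports Complex_Main "HOL-Algebra.Sym_Groups"
begin

text \<open>Index tuples of length k with entries in {1..n}: extensional functions {1..k} -> {1..n}.
An order-k tensor with side n is a real-valued function on such tuples.\<close>

definition idx :: "nat \<Rightarrow> nat \<Rightarrow> (nat \<Rightarrow> nat) set" where
  "idx k n = PiE {1..k} (\<lambda>_. {1..n})"

definition symS :: "(nat \<Rightarrow> nat) set \<Rightarrow> ((nat \<Rightarrow> nat) \<Rightarrow> real) \<Rightarrow> ((nat \<Rightarrow> nat) \<Rightarrow> real)" where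
  "symS G \<Theta> = (\<lambda>i. \<Sum>\<sigma>\<in>G. \<Theta> (i \<circ> \<sigma>))"

definition tensorO :: "nat \<Rightarrow> nat \<Rightarrow> (nat \<Rightarrow> nat \<Rightarrow> real) \<Rightarrow> ((nat \<Rightarrow> nat) \<Rightarrow> real) \<Rightarrow> ((nat \<Rightarrow> nat) \<Rightarrow> real)" where
  "tensorO k D X S = (\<lambda>j. \<Sum>i\<in>idx k D. (\<Prod>m\<in>{1..k}. X (j m) (i m)) * S i)"

definition softmaxT :: "nat \<Rightarrow> nat \<Rightarrow> ((nat \<Rightarrow> nat) \<Rightarrow> real) \<Rightarrow> ((nat \<Rightarrow> nat) \<Rightarrow> real)" where
  "softmaxT k N T = (\<lambda>j. exp (T j) / (\<Sum>l\<in>idx k N. exp (T l)))"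

end

theory Submission
  imports Defs
begin

lemma perm_facts:
  assumes "subgroup G (sym_group k)" "\<sigma> \<in> G"
  shows "\<sigma> permutes {1..k}" "inv' \<sigma> \<in> G"
proof -
  show p: "\<sigma> permutes {1..k}"
  proof -
    have "\<sigma> \<in> carrier (sym_group k)" using subgroup.subset[OF assms(1)] assms(2) by (rule subsetD)
    then show ?thesis by (simp only: sym_group_carrier)
  qed
  have "inv\<^bsub>sym_group k\<^esub> \<sigma> \<in> G" by (rule subgroup.m_inv_closed[OF assms(1) assms(2)])
  moreover have "inv\<^bsub>sym_group k\<^esub> \<sigma> = inv' \<sigma>"
    using p by (simp add: sym_group_inv_equality sym_group_carrier)
  ultimately show "inv' \<sigma> \<in> G" by simp
qed

lemma symS_inv:
  assumes "subgroup G (sym_group k)" "\<sigma> \<in> G"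
  shows "symS G \<Theta> (i \<circ> \<sigma>) = symS G \<Theta> i"
proof -
  note pf = perm_facts[OF assms]
  have cl: "\<And>a b. a \<in> G \<Longrightarrow> b \<in> G \<Longrightarrow> a \<circ> b \<in> G"
    using subgroup.m_closed[OF assms(1)] by (simp add: sym_group_mult)
  have "(\<Sum>\<tau>\<in>G. \<Theta> (i \<circ> \<sigma> \<circ> \<tau>)) = (\<Sum>\<tau>\<in>G. \<Theta> (i \<circ> \<tau>))"
  proof (rule sum.reindex_bij_witness[where i="\<lambda>\<tau>. inv' \<sigma> \<circ> \<tau>" and j="\<lambda>\<tau>. \<sigma> \<circ> \<tau>"])
    fix a assume "a \<in> G"
    show "inv' \<sigma> \<circ> (\<sigma> \<circ> a) = a"
      using pf(1) by (simp add: fun_eq_iff permutes_inverses)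
    show "\<sigma> \<circ> a \<in> G" using cl \<open>a \<in> G\<close> assms(2) by blast
    show "\<Theta> (i \<circ> (\<sigma> \<circ> a)) = \<Theta> (i \<circ> \<sigma> \<circ> a)" by (simp add: o_assoc)
  next
    fix b assume "b \<in> G"
    show "\<sigma> \<circ> (inv' \<sigma> \<circ> b) = b"
      using pf(1) by (simp add: fun_eq_iff permutes_inverses)
    show "inv' \<sigma> \<circ> b \<in> G" using cl \<open>b \<in> G\<close> pf(2) by blast
  qed
  then show ?thesis unfolding symS_def by (simp add: o_assoc)
qed

lemma idx_comp:
  assumes "\<sigma> permutes {1..k}" "i \<in> idx k n"
  shows "i \<circ> \<sigma> \<in> idx k n"
  unfolding idx_def
proof (rule PiE_I)
  have i: "i \<in> PiE {1..k} (\<lambda>_. {1..n})" using assms(2) unfolding idx_def .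
  fix x
  show "(i \<circ> \<sigma>) x \<in> {1..n}" if x: "x \<in> {1..k}"
  proof -
    have "\<sigma> x \<in> {1..k}" using assms(1) x permutes_in_image by metis
    then have "i (\<sigma> x) \<in> {1..n}" by (rule PiE_mem[OF i])
    then show ?thesis by simp
  qed
  show "(i \<circ> \<sigma>) x = undefined" if x: "x \<notin> {1..k}"
  proof -
    have "\<sigma> x = x" using assms(1) x by (rule permutes_not_in)
    moreover have "i x = undefined" using i x by (rule PiE_arb)
    ultimately show ?thesis by simp
  qed
qed

theorem theorem9p1:
  fixes k D N :: nat and G :: "(nat \<Rightarrow> nat) set"
    and \<Theta> :: "(nat \<Rightarrow> nat) \<Rightarrow> real" and X :: "nat \<Rightarrow> nat \<Rightarrow> real"
  assumes "0 < k" "0 < D" "0 < N"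
    and "subgroup G (sym_group k)"
    and "\<sigma> \<in> G" and "j \<in> idx k N"
  shows "softmaxT k N (tensorO k D X (symS G \<Theta>)) j
       = softmaxT k N (tensorO k D X (symS G \<Theta>)) (j \<circ> \<sigma>)"
proof -
  note pf = perm_facts[OF assms(4,5)]
  have pi: "inv' \<sigma> permutes {1..k}" using pf(1) by (simp add: permutes_inv)
  have prod: "(\<Prod>m\<in>{1..k}. X (j (\<sigma> m)) (i (\<sigma> m))) = (\<Prod>m\<in>{1..k}. X (j m) (i m))" for i
    using prod.permute[OF pf(1), of "\<lambda>m. X (j m) (i m)"] by (simp add: o_def)
  have "tensorO k D X (symS G \<Theta>) (j \<circ> \<sigma>) = tensorO k D X (symS G \<Theta>) j"
    unfolding tensorO_def
  proof (rule sum.reindex_bij_witness[where i="\<lambda>i. i \<circ> \<sigma>" and j="\<lambda>i. i \<circ> inv' \<sigma>"])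
    fix a assume a: "a \<in> idx k D"
    show "a \<circ> inv' \<sigma> \<circ> \<sigma> = a" using pf(1) by (simp add: fun_eq_iff permutes_inverses)
    show "a \<circ> inv' \<sigma> \<in> idx k D" using idx_comp[OF pi a] .
    have S: "symS G \<Theta> (a \<circ> inv' \<sigma>) = symS G \<Theta> a"
      using symS_inv[OF assms(4) pf(2)] .
    have P: "(\<Prod>m\<in>{1..k}. X (j m) ((a \<circ> inv' \<sigma>) m)) = (\<Prod>m\<in>{1..k}. X (j (\<sigma> m)) (a m))"
      using prod[of "a \<circ> inv' \<sigma>"] pf(1) by (simp add: permutes_inverses)
    show "(\<Prod>m\<in>{1..k}. X (j m) ((a \<circ> inv' \<sigma>) m)) * symS G \<Theta> (a \<circ> inv' \<sigma>) =
         (\<Prod>m\<in>{1..k}. X ((j \<circ> \<sigma>) m) (a m)) * symS G \<Theta> a"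
      using S P by simp
  next
    fix b assume b: "b \<in> idx k D"
    show "b \<circ> \<sigma> \<circ> inv' \<sigma> = b" using pf(1) by (simp add: fun_eq_iff permutes_inverses)
    show "b \<circ> \<sigma> \<in> idx k D" using idx_comp[OF pf(1) b] .
  qed
  then show ?thesis unfolding softmaxT_def by simp
qed

end
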